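(* Let $\nu\ge0$, $\omega_{av}(0)\in\mathbb{R}$, $v_c(0)\in\mathbb{C}$ with $v_c(0)\ne-1$, and $\omega_{-1}(0)\in\mathbb{C}\setminus\{0\}$, and let $(\omega_{-1}(t),v_c(t),\omega_{av}(t))$ solve $$\frac{d\omega_{-1}}{dt}=(\mathrm{i}\omega_{av}-\nu)\omega_{-1}+\frac{2\omega_{-1}^2}{1+v_c},\qquad\frac{dv_c}{dt}=\omega_{-1},\qquad\frac{d\omega_{av}}{dt}=-\nu\omega_{av}$$ on a time interval $I\ni 0$. Then the trajectory $\{v_c(t):t\in I\}$ is contained in a circle or a straight line in $\mathbb{C}$. More precisely, when $\omega_{av}(0)=0$, one has $v_c(t)=\frac{v_c(0)+1}{1-\Omega\theta(t)}-1$ with $\Omega=\frac{\omega_{-1}(0)}{1+v_c(0)}$ and $\theta(t)=\frac{1-e^{-\nu t}}{\nu}$ ($\theta(t)=t$ if $\nu=0$), and the trajectory lies on a circle if $\mathrm{Im}\,\Omega\ne0$ and on a straight line if $\mathrm{Im}\,\Omega=0$.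
   Context: These are the pole dynamics equations for the generalized Constantin–Lax–Majda equation with $a=0$, $\sigma=0$ on the circle, for a solution $\tilde\omega=\omega_++\omega_-+\omega_{av}$ with $\omega_-(x,t)=\omega_{-1}(t)\left[\frac{1}{\tan(x/2)-\mathrm{i}v_c(t)}-\frac{1}{-\mathrm{i}-\mathrm{i}v_c(t)}\right]$ and $\omega_+(x,t)=\overline{\omega_-(\bar x,t)}$. *)

theory Defs
  imports "HOL-Analysis.Analysis"
begin

definition on_circle :: "complex set \<Rightarrow> bool" where
  "on_circle S \<longleftrightarrow> (\<exists>c r. r > 0 \<and> S \<subseteq> sphere c r)"

definition on_line :: "complex set \<Rightarrow> bool" where
  "on_line S \<longleftrightarrow> (\<exists>a b. b \<noteq> 0 \<and> S \<subseteq> range (\<lambda>s::real. a + complex_of_real s * b))"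

definition theta :: "real \<Rightarrow> real \<Rightarrow> real" where
  "theta \<nu> t = (if \<nu> = 0 then t else (1 - exp (- \<nu> * t)) / \<nu>)"

end

theory Submission
  imports Defs
begin


lemma circ_k_real:
  fixes x y a b \<rho> k D :: real
  assumes h: "(x - a)^2 + (y - b)^2 = \<rho>^2" and D: "D = x^2 + y^2" "D \<noteq> 0"
    and k: "k = a^2 + b^2 - \<rho>^2" "k \<noteq> 0"
  shows "(x / D - a / k)^2 + (- y / D + b / k)^2 = (\<rho> / k)^2"
proof -
  have "(x / D - a / k)^2 + (- y / D + b / k)^2 = ((x*k - a*D)^2 + (b*D - y*k)^2) / (D^2 * k^2)"
    using D(2) k(2) by (simp add: field_simps power2_eq_square)
  also have "(x*k - a*D)^2 + (b*D - y*k)^2 = \<rho>^2 * D^2"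
    using h D(1) k(1) by algebra
  finally show ?thesis using D(2) k(2) by (simp add: field_simps power2_eq_square)
qed

lemma circ_k:
  fixes z m :: complex and \<rho> k :: real
  assumes "cmod (z - m) = \<rho>" "z \<noteq> 0" "k = (cmod m)^2 - \<rho>^2" "k \<noteq> 0"
  shows "cmod (inverse z - cnj m / of_real k) = \<rho> / \<bar>k\<bar>"
proof -
  have h: "(Re z - Re m)^2 + (Im z - Im m)^2 = \<rho>^2" using assms(1)
    by (metis cmod_power2 minus_complex.simps)
  have k: "k = (Re m)^2 + (Im m)^2 - \<rho>^2" using assms(3) by (simp add: cmod_power2)
  have d: "(Re z)^2 + (Im z)^2 \<noteq> 0" using assms(2)
    by (simp add: complex_eq_iff)
  have r: "\<rho> \<ge> 0" using assms(1) by auto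
  have "(cmod (inverse z - cnj m / of_real k))^2 = (\<rho> / k)^2"
    unfolding cmod_power2
    using circ_k_real[OF h refl d k assms(4)] assms(4)
    by (simp add: Re_divide Im_divide power2_eq_square inverse_eq_divide)
  then show ?thesis using r
    by (metis abs_of_nonneg norm_ge_zero power2_abs power2_eq_iff_nonneg abs_divide abs_abs divide_nonneg_nonneg abs_ge_zero real_sqrt_abs)
qed


lemma circ_0_real:
  fixes x y a b \<rho> D M :: real
  assumes h: "(x - a)^2 + (y - b)^2 = \<rho>^2" and D: "D = x^2 + y^2" "D \<noteq> 0"
    and M: "M = a^2 + b^2" "M = \<rho>^2" "M \<noteq> 0"
  shows "x / D = a / (2*M) + (b*x - a*y)/(D*M) * b"
    and "- y / D = - b / (2*M) + (b*x - a*y)/(D*M) * a"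
proof -
  have e: "D = 2*(a*x+b*y)" using h D(1) M(1,2) by algebra
  show "x / D = a / (2*M) + (b*x - a*y)/(D*M) * b"
    using D(2) M(3) apply (simp add: field_simps) using e M(1) by algebra
  show "- y / D = - b / (2*M) + (b*x - a*y)/(D*M) * a"
    using D(2) M(3) apply (simp add: field_simps) using e M(1) by algebra
qed

lemma circ_0:
  fixes z m :: complex and \<rho> :: real
  assumes "cmod (z - m) = \<rho>" "z \<noteq> 0" "(cmod m)^2 = \<rho>^2" "m \<noteq> 0"
  shows "inverse z \<in> range (\<lambda>s::real. cnj m / (2 * of_real ((cmod m)^2)) + of_real s * (\<i> * cnj m))"
proof -
  have h: "(Re z - Re m)^2 + (Im z - Im m)^2 = \<rho>^2" using assms(1)
    by (metis cmod_power2 minus_complex.simps)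
  have k: "(Re m)^2 + (Im m)^2 = \<rho>^2" using assms(3) by (simp add: cmod_power2)
  have d: "(Re z)^2 + (Im z)^2 \<noteq> 0" using assms(2)
    by (simp add: complex_eq_iff)
  have dm: "(Re m)^2 + (Im m)^2 \<noteq> 0" using assms(4)
    by (simp add: complex_eq_iff)
  note r = circ_0_real[OF h refl d refl k dm]
  define s where "s = (Im m * Re z - Re m * Im z) / (((Re z)^2 + (Im z)^2) * ((Re m)^2 + (Im m)^2))"
  have "inverse z = cnj m / (2 * of_real ((cmod m)^2)) + of_real s * (\<i> * cnj m)"
    using r unfolding s_def cmod_power2
    by (simp add: complex_eq_iff Re_divide Im_divide power2_eq_square inverse_eq_divide)
  then show ?thesis by blast
qed


lemma inv_circle:
  fixes S :: "complex set" and m :: complex and \<rho> :: real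
  assumes r: "\<rho> > 0" and S: "\<forall>z\<in>S. cmod (z - m) = \<rho> \<and> z \<noteq> 0"
  shows "on_circle ((\<lambda>z. inverse z - 1) ` S) \<or> on_line ((\<lambda>z. inverse z - 1) ` S)"
proof (cases "(cmod m)^2 - \<rho>^2 = 0")
  case False
  define k where "k = (cmod m)^2 - \<rho>^2"
  have "on_circle ((\<lambda>z. inverse z - 1) ` S)"
    unfolding on_circle_def
  proof (intro exI conjI)
    show "\<rho> / \<bar>k\<bar> > 0" using r False k_def by auto
    show "(\<lambda>z. inverse z - 1) ` S \<subseteq> sphere (cnj m / of_real k - 1) (\<rho> / \<bar>k\<bar>)"
    proof
      fix y assume "y \<in> (\<lambda>z. inverse z - 1) ` S"
      then obtain z where z: "z \<in> S" "y = inverse z - 1" by auto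
      have "cmod (inverse z - cnj m / of_real k) = \<rho> / \<bar>k\<bar>"
        using circ_k[of z m \<rho> k] S z False k_def by auto
      then show "y \<in> sphere (cnj m / of_real k - 1) (\<rho> / \<bar>k\<bar>)"
        using z by (simp add: dist_norm norm_minus_commute)
    qed
  qed
  then show ?thesis by blast
next
  case True
  have m: "m \<noteq> 0" using True r by auto
  have "on_line ((\<lambda>z. inverse z - 1) ` S)"
    unfolding on_line_def
  proof (intro exI conjI)
    show "\<i> * cnj m \<noteq> 0" using m by simp
    show "(\<lambda>z. inverse z - 1) ` S \<subseteq> range (\<lambda>s::real. (cnj m / (2 * of_real ((cmod m)^2)) - 1) + of_real s * (\<i> * cnj m))"
    proof
      fix y assume "y \<in> (\<lambda>z. inverse z - 1) ` S"
      then obtain z where z: "z \<in> S" "y = inverse z - 1" by auto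
      have "inverse z \<in> range (\<lambda>s::real. cnj m / (2 * of_real ((cmod m)^2)) + of_real s * (\<i> * cnj m))"
        using circ_0[of z m \<rho>] S z True m by auto
      then obtain s where "inverse z = cnj m / (2 * of_real ((cmod m)^2)) + of_real s * (\<i> * cnj m)" by auto
      then show "y \<in> range (\<lambda>s::real. (cnj m / (2 * of_real ((cmod m)^2)) - 1) + of_real s * (\<i> * cnj m))"
        using z by (intro image_eqI[of _ _ s]) auto
    qed
  qed
  then show ?thesis by blast
qed

lemma line_circ_real:
  fixes a b x D :: real
  assumes D: "D = (1 - a*x)^2 + (b*x)^2" "D \<noteq> 0" and q: "b \<noteq> 0"
  shows "((1 - a*x)/D - 1/2)^2 + (b*x/D - a/(2*b))^2 = (1/2)^2 + (a/(2*b))^2"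
  using D(2) q apply (simp add: field_simps power2_eq_square)
  using D(1) by algebra

lemma expl_geom:
  fixes u0 \<Omega> :: complex and T :: "real set"
  assumes u0: "u0 \<noteq> 0" and T: "\<forall>s\<in>T. 1 - \<Omega> * of_real s \<noteq> 0"
  shows "(Im \<Omega> \<noteq> 0 \<longrightarrow> on_circle ((\<lambda>s. u0 / (1 - \<Omega> * of_real s) - 1) ` T))
       \<and> (Im \<Omega> = 0 \<longrightarrow> on_line ((\<lambda>s. u0 / (1 - \<Omega> * of_real s) - 1) ` T))"
proof (intro conjI impI)
  assume q: "Im \<Omega> \<noteq> 0"
  define c where "c = Complex (1/2) (Re \<Omega> / (2 * Im \<Omega>))"
  have c0: "c \<noteq> 0" by (simp add: c_def complex_eq_iff)
  show "on_circle ((\<lambda>s. u0 / (1 - \<Omega> * of_real s) - 1) ` T)"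
    unfolding on_circle_def
  proof (intro exI conjI)
    show "cmod u0 * cmod c > 0" using u0 c0 by simp
    show "(\<lambda>s. u0 / (1 - \<Omega> * of_real s) - 1) ` T \<subseteq> sphere (u0 * c - 1) (cmod u0 * cmod c)"
    proof
      fix y assume "y \<in> (\<lambda>s. u0 / (1 - \<Omega> * of_real s) - 1) ` T"
      then obtain s where s: "s \<in> T" "y = u0 / (1 - \<Omega> * of_real s) - 1" by auto
      define D where "D = (1 - Re \<Omega> * s)^2 + (Im \<Omega> * s)^2"
      have D0: "D \<noteq> 0" using T s unfolding D_def
        by (auto simp: complex_eq_iff)
      have "(cmod (1 / (1 - \<Omega> * of_real s) - c))^2 = (cmod c)^2"
        using line_circ_real[OF D_def D0 q] D0 unfolding cmod_power2 c_def D_def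
        by (simp add: Re_divide Im_divide power2_eq_square)
      then have e: "cmod (1 / (1 - \<Omega> * of_real s) - c) = cmod c"
        using power2_eq_iff_nonneg norm_ge_zero by blast
      have "dist (u0 * c - 1) y = cmod (u0 * (1 / (1 - \<Omega> * of_real s) - c))"
        using s by (simp add: dist_norm norm_minus_commute algebra_simps)
      also have "\<dots> = cmod u0 * cmod c" using e by (simp add: norm_mult)
      finally show "y \<in> sphere (u0 * c - 1) (cmod u0 * cmod c)" by simp
    qed
  qed
next
  assume q: "Im \<Omega> = 0"
  show "on_line ((\<lambda>s. u0 / (1 - \<Omega> * of_real s) - 1) ` T)"
    unfolding on_line_def
  proof (intro exI conjI)
    show "u0 \<noteq> 0" by fact
    show "(\<lambda>s. u0 / (1 - \<Omega> * of_real s) - 1) ` T \<subseteq> range (\<lambda>r::real. -1 + of_real r * u0)"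
    proof
      fix y assume "y \<in> (\<lambda>s. u0 / (1 - \<Omega> * of_real s) - 1) ` T"
      then obtain s where s: "s \<in> T" "y = u0 / (1 - \<Omega> * of_real s) - 1" by auto
      have O: "\<Omega> = of_real (Re \<Omega>)" using q by (simp add: complex_eq_iff)
      have "y = -1 + of_real (1 / (1 - Re \<Omega> * s)) * u0"
        using s by (subst (asm) O) (simp add: field_simps)
      then show "y \<in> range (\<lambda>r::real. -1 + of_real r * u0)" by blast
    qed
  qed
qed


lemma vd_inverse:
  fixes f :: "real \<Rightarrow> complex"
  assumes "(f has_vector_derivative f') (at x within S)" "f x \<noteq> 0"
  shows "((\<lambda>t. inverse (f t)) has_vector_derivative (- f' * inverse (f x)^2)) (at x within S)"
  using field_vector_diff_chain_within[OF assms(1) DERIV_inverse[OF assms(2)]]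
  by (simp add: o_def power2_eq_square)

lemma vd_exp:
  fixes f :: "real \<Rightarrow> complex"
  assumes "(f has_vector_derivative f') (at x within S)"
  shows "((\<lambda>t. exp (f t)) has_vector_derivative (f' * exp (f x))) (at x within S)"
  using field_vector_diff_chain_within[OF assms(1) has_field_derivative_at_within[OF DERIV_exp]]
  by (simp add: o_def)

lemma theta_deriv: "(theta \<nu> has_real_derivative exp (- \<nu> * t)) (at t within S)"
proof (cases "\<nu> = 0")
  case True
  then have "theta \<nu> = (\<lambda>t. t)" by (auto simp: theta_def)
  then show ?thesis using True by (auto intro!: derivative_eq_intros)
next
  case False
  then have "theta \<nu> = (\<lambda>t. (1 - exp (- \<nu> * t)) / \<nu>)" by (auto simp: theta_def)
  then show ?thesis using False by (auto intro!: derivative_eq_intros)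
qed

lemma theta0: "theta \<nu> 0 = 0" by (simp add: theta_def)

lemma wav_sol:
  fixes wav :: "real \<Rightarrow> real"
  assumes "convex I" "0 \<in> I"
    and ode3: "\<forall>t\<in>I. (wav has_real_derivative (- \<nu> * wav t)) (at t within I)"
  shows "\<forall>t\<in>I. wav t = wav 0 * exp (- \<nu> * t)"
proof -
  have "\<exists>c. \<forall>t\<in>I. wav t * exp (\<nu> * t) = c"
  proof (rule has_field_derivative_zero_constant[OF assms(1)])
    fix t assume t: "t \<in> I"
    show "((\<lambda>t. wav t * exp (\<nu> * t)) has_field_derivative 0) (at t within I)"
      by (auto intro!: derivative_eq_intros ode3[rule_format, OF t] simp: algebra_simps)
  qed
  then obtain c where c: "\<forall>t\<in>I. wav t * exp (\<nu> * t) = c" by blast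
  have "c = wav 0" using c assms(2) by force
  show ?thesis
  proof
    fix t assume "t \<in> I"
    then have "wav t * exp (\<nu> * t) = wav 0" using c \<open>c = wav 0\<close> by auto
    then have "wav t = wav 0 / exp (\<nu> * t)" by (simp add: field_simps)
    then show "wav t = wav 0 * exp (- \<nu> * t)" by (simp add: exp_minus field_simps)
  qed
qed

theorem mainTheorem14:
  fixes \<nu> :: real and I :: "real set"
    and w1 vc :: "real \<Rightarrow> complex" and wav :: "real \<Rightarrow> real"
  assumes nu: "\<nu> \<ge> 0"
    and I: "is_interval I" "0 \<in> I"
    and vc0: "vc 0 \<noteq> -1"
    and w10: "w1 0 \<noteq> 0"
    and vc_ne: "\<forall>t\<in>I. vc t \<noteq> -1"
    and ode1: "\<forall>t\<in>I. (w1 has_vector_derivative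
                 ((\<i> * complex_of_real (wav t) - complex_of_real \<nu>) * w1 t
                   + 2 * (w1 t)\<^sup>2 / (1 + vc t))) (at t within I)"
    and ode2: "\<forall>t\<in>I. (vc has_vector_derivative w1 t) (at t within I)"
    and ode3: "\<forall>t\<in>I. (wav has_real_derivative (- \<nu> * wav t)) (at t within I)"
  shows "(on_circle (vc ` I) \<or> on_line (vc ` I)) \<and>
         (wav 0 = 0 \<longrightarrow>
            (let \<Omega> = w1 0 / (1 + vc 0) in
               (\<forall>t\<in>I. vc t = (vc 0 + 1) / (1 - \<Omega> * complex_of_real (theta \<nu> t)) - 1) \<and>
               (Im \<Omega> \<noteq> 0 \<longrightarrow> on_circle (vc ` I)) \<and>
               (Im \<Omega> = 0 \<longrightarrow> on_line (vc ` I))))"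
proof -
  have cI: "convex I" using I(1) by (simp add: is_interval_convex)
  define \<kappa> where "\<kappa> = wav 0"
  define u where "u t = 1 + vc t" for t
  have u_ne: "u t \<noteq> 0" if "t \<in> I" for t
    using vc_ne that unfolding u_def by (metis add.commute add_eq_0_iff)
  have u0: "u 0 \<noteq> 0" using u_ne I(2) .
  have wsol: "wav t = \<kappa> * exp (- \<nu> * t)" if "t \<in> I" for t
    using wav_sol[OF cI I(2) ode3] that unfolding \<kappa>_def by auto
  have du: "(u has_vector_derivative w1 t) (at t within I)" if t: "t \<in> I" for t
    unfolding u_def[abs_def]
    by (auto intro!: derivative_eq_intros ode2[rule_format, OF t])
  define E where "E t = exp (complex_of_real (\<nu> * t) - \<i> * complex_of_real (\<kappa> * theta \<nu> t))" for t
  have dE: "(E has_vector_derivative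
      ((complex_of_real \<nu> - \<i> * complex_of_real (\<kappa> * exp (- \<nu> * t))) * E t)) (at t within I)" for t
  proof -
    have "((\<lambda>t. complex_of_real (\<nu> * t) - \<i> * complex_of_real (\<kappa> * theta \<nu> t)) has_vector_derivative
      (complex_of_real \<nu> - \<i> * complex_of_real (\<kappa> * exp (- \<nu> * t)))) (at t within I)"
      by (auto intro!: derivative_eq_intros theta_deriv)
    from vd_exp[OF this] show ?thesis unfolding E_def[abs_def] by simp
  qed
  define C where "C = w1 0 * (inverse (u 0) * inverse (u 0))"
  have P: "w1 t * (inverse (u t) * inverse (u t)) * E t = C" if t: "t \<in> I" for t
  proof -
    have D: "((\<lambda>t. w1 t * (inverse (u t) * inverse (u t)) * E t) has_vector_derivative 0) (at t within I)"
      if 1: "t \<in> I" for t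
    proof -
      note d1 = ode1[rule_format, OF 1]
      note d2 = vd_inverse[OF du[OF 1] u_ne[OF 1]]
      have "((\<lambda>t. w1 t * (inverse (u t) * inverse (u t)) * E t) has_vector_derivative
         (w1 t * (inverse (u t) * inverse (u t)) * ((complex_of_real \<nu> - \<i> * complex_of_real (\<kappa> * exp (- \<nu> * t))) * E t)
          + (w1 t * (inverse (u t) * (- w1 t * inverse (u t)^2) + (- w1 t * inverse (u t)^2) * inverse (u t))
             + ((\<i> * complex_of_real (wav t) - complex_of_real \<nu>) * w1 t + 2 * (w1 t)\<^sup>2 / (1 + vc t)) * (inverse (u t) * inverse (u t))) * E t))
         (at t within I)"
        by (intro has_vector_derivative_mult d1 d2 dE)
      moreover have "w1 t * (inverse (u t) * inverse (u t)) * ((complex_of_real \<nu> - \<i> * complex_of_real (\<kappa> * exp (- \<nu> * t))) * E t)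
          + (w1 t * (inverse (u t) * (- w1 t * inverse (u t)^2) + (- w1 t * inverse (u t)^2) * inverse (u t))
             + ((\<i> * complex_of_real (wav t) - complex_of_real \<nu>) * w1 t + 2 * (w1 t)\<^sup>2 / (1 + vc t)) * (inverse (u t) * inverse (u t))) * E t = 0"
        using u_ne[OF 1] unfolding wsol[OF 1] u_def[symmetric]
        by (simp add: field_simps power2_eq_square)
      ultimately show ?thesis by simp
    qed
    obtain c where c: "\<forall>t\<in>I. w1 t * (inverse (u t) * inverse (u t)) * E t = c"
      using has_vector_derivative_zero_constant[OF cI D] by metis
    have "E 0 = 1" by (simp add: E_def theta0)
    then have "c = C" using c I(2) unfolding C_def by force
    then show ?thesis using c t by auto
  qed
  define G where "G t = exp (\<i> * complex_of_real (\<kappa> * theta \<nu> t)) * complex_of_real (exp (- \<nu> * t))" for t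
  define F where "F t = (if \<kappa> = 0 then complex_of_real (theta \<nu> t)
      else (exp (\<i> * complex_of_real (\<kappa> * theta \<nu> t)) - 1) / (\<i> * complex_of_real \<kappa>))" for t
  have F0: "F 0 = 0" by (simp add: F_def theta0)
  have dF: "(F has_vector_derivative G t) (at t within I)" for t
  proof (cases "\<kappa> = 0")
    case True
    then have "F = (\<lambda>t. complex_of_real (theta \<nu> t))" by (auto simp: F_def)
    then show ?thesis using True unfolding G_def
      by (auto intro!: derivative_eq_intros theta_deriv)
  next
    case False
    then have Fe: "F = (\<lambda>t. (exp (\<i> * complex_of_real (\<kappa> * theta \<nu> t)) - 1) / (\<i> * complex_of_real \<kappa>))"
      by (auto simp: F_def)
    have "((\<lambda>t. \<i> * complex_of_real (\<kappa> * theta \<nu> t)) has_vector_derivative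
        \<i> * complex_of_real (\<kappa> * exp (- \<nu> * t))) (at t within I)"
      by (auto intro!: derivative_eq_intros theta_deriv)
    from vd_exp[OF this]
    have "((\<lambda>t. (exp (\<i> * complex_of_real (\<kappa> * theta \<nu> t)) - 1) / (\<i> * complex_of_real \<kappa>)) has_vector_derivative
        (\<i> * complex_of_real (\<kappa> * exp (- \<nu> * t)) * exp (\<i> * complex_of_real (\<kappa> * theta \<nu> t)) - 0) / (\<i> * complex_of_real \<kappa>)) (at t within I)"
      by (intro has_vector_derivative_divide has_vector_derivative_diff) auto
    then show ?thesis unfolding Fe G_def using False by (simp add: field_simps)
  qed
  have EG: "E t * G t = 1" for t
  proof -
    have "E t * G t = exp (complex_of_real (\<nu> * t) - \<i> * complex_of_real (\<kappa> * theta \<nu> t)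
          + \<i> * complex_of_real (\<kappa> * theta \<nu> t) + complex_of_real (- \<nu> * t))"
      unfolding E_def G_def exp_add exp_of_real by (simp add: mult.assoc)
    also have "\<dots> = 1" by simp
    finally show ?thesis .
  qed
  have Z: "inverse (u t) = inverse (u 0) - C * F t" if t: "t \<in> I" for t
  proof -
    have D: "((\<lambda>t. inverse (u t) + C * F t) has_vector_derivative 0) (at t within I)"
      if 1: "t \<in> I" for t
    proof -
      have "((\<lambda>t. inverse (u t) + C * F t) has_vector_derivative
            (- w1 t * inverse (u t)^2 + C * G t)) (at t within I)"
        by (intro has_vector_derivative_add vd_inverse[OF du[OF 1] u_ne[OF 1]]
              has_vector_derivative_mult_right dF)
      moreover have "w1 t * inverse (u t)^2 = C * G t"
      proof -
        have "w1 t * inverse (u t)^2 = w1 t * (inverse (u t) * inverse (u t)) * E t * G t"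
          using EG[of t] by (simp add: power2_eq_square mult.assoc)
        also have "\<dots> = C * G t" using P[OF 1] by simp
        finally show ?thesis .
      qed
      ultimately show ?thesis by simp
    qed
    obtain c where c: "\<forall>t\<in>I. inverse (u t) + C * F t = c"
      using has_vector_derivative_zero_constant[OF cI D] by metis
    have "c = inverse (u 0)" using c I(2) F0 by force
    then show ?thesis using c t by (auto simp: algebra_simps)
  qed
  have C0: "C \<noteq> 0" using w10 u0 unfolding C_def by simp
  have vcI: "vc ` I = (\<lambda>z. inverse z - 1) ` ((\<lambda>t. inverse (u t)) ` I)"
    unfolding image_image using u_ne by (auto simp: u_def intro!: image_cong)
  show ?thesis
  proof (cases "\<kappa> = 0")
    case False
    define m where "m = inverse (u 0) + C / (\<i> * complex_of_real \<kappa>)"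
    define \<rho> where "\<rho> = cmod C / \<bar>\<kappa>\<bar>"
    have \<rho>: "\<rho> > 0" using C0 False unfolding \<rho>_def by simp
    have S: "\<forall>z\<in>(\<lambda>t. inverse (u t)) ` I. cmod (z - m) = \<rho> \<and> z \<noteq> 0"
    proof
      fix z assume "z \<in> (\<lambda>t. inverse (u t)) ` I"
      then obtain t where t: "t \<in> I" "z = inverse (u t)" by auto
      have "z - m = - C * exp (\<i> * complex_of_real (\<kappa> * theta \<nu> t)) / (\<i> * complex_of_real \<kappa>)"
        unfolding t(2) Z[OF t(1)] m_def F_def using False by (simp add: field_simps)
      then have "cmod (z - m) = \<rho>"
        unfolding \<rho>_def by (simp add: norm_mult norm_divide norm_exp_i_times)
      moreover have "z \<noteq> 0" using t u_ne by simp
      ultimately show "cmod (z - m) = \<rho> \<and> z \<noteq> 0" by blast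
    qed
    have "on_circle (vc ` I) \<or> on_line (vc ` I)"
      unfolding vcI by (rule inv_circle[OF \<rho> S])
    then show ?thesis using False unfolding \<kappa>_def by simp
  next
    case True
    define \<Omega> where "\<Omega> = w1 0 / (1 + vc 0)"
    have \<Omega>: "\<Omega> = C * u 0" unfolding \<Omega>_def C_def u_def[of 0, symmetric] using u0
      by (simp add: field_simps power2_eq_square)
    have nz: "1 - \<Omega> * complex_of_real (theta \<nu> t) \<noteq> 0" and
         fo: "vc t = (vc 0 + 1) / (1 - \<Omega> * complex_of_real (theta \<nu> t)) - 1" if t: "t \<in> I" for t
    proof -
      have iu: "inverse (u t) = (1 - \<Omega> * complex_of_real (theta \<nu> t)) / u 0"
        using Z[OF t] True u0 unfolding F_def \<Omega> by (simp add: field_simps)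
      show "1 - \<Omega> * complex_of_real (theta \<nu> t) \<noteq> 0"
        using iu u_ne[OF t] by auto
      then have "u t = u 0 / (1 - \<Omega> * complex_of_real (theta \<nu> t))"
        using iu u0 u_ne[OF t] by (metis inverse_divide inverse_inverse_eq)
      then show "vc t = (vc 0 + 1) / (1 - \<Omega> * complex_of_real (theta \<nu> t)) - 1"
        unfolding u_def by (simp add: algebra_simps)
    qed
    have vcI2: "vc ` I = (\<lambda>s. (vc 0 + 1) / (1 - \<Omega> * complex_of_real s) - 1) ` (theta \<nu> ` I)"
      unfolding image_image using fo by (auto intro!: image_cong)
    have g: "(Im \<Omega> \<noteq> 0 \<longrightarrow> on_circle (vc ` I)) \<and> (Im \<Omega> = 0 \<longrightarrow> on_line (vc ` I))"
      unfolding vcI2 by (rule expl_geom) (use vc0 nz in \<open>auto simp: add_eq_0_iff minus_equation_iff[of "vc 0"]\<close>)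
    have "on_circle (vc ` I) \<or> on_line (vc ` I)" using g by blast
    then show ?thesis using g fo unfolding Let_def \<Omega>_def by blast
  qed
qed

end
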